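(* Let $G$ be a graph of order $p$ with $1\le\delta(G)\le p-2$. If $G$ has a $d$-sequence $\{\mathcal G_i\}_{i=1}^s$ such that $z_i(G)\ge 0$ for all $2\le i\le s$, then $str(G)\le p+d_G$. Moreover, equality holds if $d_G=\delta(G)$.
   Context: For a graph $G$ of order $p$, a numbering of $G$ is a bijection $f:V(G)\to[1,p]$ ($[a,b]$ is the set of integers from $a$ to $b$). The strength of a numbering $f$ is $str_f(G)=\max\{f(u)+f(v): uv\in E(G)\}$, and $str(G)=\min\{str_f(G): f \text{ a numbering of } G\}$. $\delta(G)$ denotes the minimum degree; $G+H$ denotes disjoint union; $mK_1$ is the edgeless graph on $m$ vertices; $K_r$ the complete graph. $d$-sequence: Let $G$ have order $p$ with $1\le\delta(G)\le p-2$. Set $\mathcal G_1=G_1=G$, $m_1=0$. For each $i$, write $\mathcal G_i=m_iK_1+G_i$, where $m_i\ge0$ is the number of isolated vertices of $\mathcal G_i$ and $G_i$ has no isolated vertices. If $\mathcal G_i$ is neither of the form $mK_1$ ($m\ge1$) nor $mK_1+K_r$ ($m\ge0$, $r\ge2$), choose any vertex $u_i$ of $G_i$, put $d_i=\deg_{G_i}(u_i)$, and let $\mathcal G_{i+1}$ be obtained from $G_i$ by deleting $u_i$ together with all its neighbours in $G_i$. Stop at the first index $s$ ($s\ge 2$) for which $\mathcal G_s$ is $m_sK_1$ with $m_s\ge1$ (then set $d_s=0$) or $m_sK_1+K_r$ with $m_s\ge0$, $r\ge2$ (then $d_s=r-1$). The sequence $\{\mathcal G_i\}_{i=1}^s$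 is a $d$-sequence of $G$. Write $d_G=d_1$, $y_j(G)=m_j+1-d_j$ and $z_i(G)=\sum_{j=2}^i y_j(G)$ for $2\le i\le s$. *)

theory Defs
  imports Main
begin

definition simple_graph :: "'a set \<Rightarrow> 'a set set \<Rightarrow> bool" where
  "simple_graph V E \<longleftrightarrow> finite V \<and> (\<forall>e\<in>E. \<exists>x y. x \<in> V \<and> y \<in> V \<and> x \<noteq> y \<and> e = {x, y})"

definition nbrs :: "'a set set \<Rightarrow> 'a set \<Rightarrow> 'a \<Rightarrow> 'a set" where
  "nbrs E W v = {w \<in> W. {v, w} \<in> E}"

definition deg :: "'a set set \<Rightarrow> 'a set \<Rightarrow> 'a \<Rightarrow> nat" where
  "deg E W v = card (nbrs E W v)"

definition min_degree :: "'a set \<Rightarrow> 'a set set \<Rightarrow> nat" where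
  "min_degree V E = Min (deg E V ` V)"

definition isol :: "'a set set \<Rightarrow> 'a set \<Rightarrow> 'a set" where
  "isol E W = {v \<in> W. nbrs E W v = {}}"

definition core :: "'a set set \<Rightarrow> 'a set \<Rightarrow> 'a set" where
  "core E W = W - isol E W"

definition is_mK1 :: "'a set set \<Rightarrow> 'a set \<Rightarrow> bool" where
  "is_mK1 E W \<longleftrightarrow> W \<noteq> {} \<and> core E W = {}"

text \<open>Induced subgraph on W is m K_1 + K_r with m \<ge> 0, r \<ge> 2 (r = card (core E W)).\<close>
definition is_mK1_Kr :: "'a set set \<Rightarrow> 'a set \<Rightarrow> bool" where
  "is_mK1_Kr E W \<longleftrightarrow> card (core E W) \<ge> 2 \<and>
     (\<forall>x\<in>core E W. \<forall>y\<in>core E W. x \<noteq> y \<longrightarrow> {x, y} \<in> E)"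

definition numbering :: "'a set \<Rightarrow> ('a \<Rightarrow> nat) \<Rightarrow> bool" where
  "numbering V f \<longleftrightarrow> bij_betw f V {1..card V}"

definition strength_of :: "'a set set \<Rightarrow> ('a \<Rightarrow> nat) \<Rightarrow> nat" where
  "strength_of E f = Max {f x + f y | x y. {x, y} \<in> E}"

definition strength :: "'a set \<Rightarrow> 'a set set \<Rightarrow> nat" where
  "strength V E = Min {strength_of E f | f. numbering V f}"

text \<open>d-sequence: \<G>_i is the induced subgraph on W i (i = 1..s), u i (i < s) the chosen vertex.
  \<G>_{i+1} is obtained from G_i = \<G>_i minus its isolated vertices by deleting u_i and its neighbours.\<close>
definition d_sequence :: "'a set \<Rightarrow> 'a set set \<Rightarrow> nat \<Rightarrow> (nat \<Rightarrow> 'a set) \<Rightarrow> (nat \<Rightarrow> 'a) \<Rightarrow> bool" where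
  "d_sequence V E s W u \<longleftrightarrow> 2 \<le> s \<and> W 1 = V \<and>
     (\<forall>i. 1 \<le> i \<and> i < s \<longrightarrow>
        \<not> is_mK1 E (W i) \<and> \<not> is_mK1_Kr E (W i) \<and>
        u i \<in> core E (W i) \<and>
        W (Suc i) = core E (W i) - ({u i} \<union> nbrs E (core E (W i)) (u i))) \<and>
     (is_mK1 E (W s) \<or> is_mK1_Kr E (W s))"

definition dseq_m :: "'a set set \<Rightarrow> (nat \<Rightarrow> 'a set) \<Rightarrow> nat \<Rightarrow> nat" where
  "dseq_m E W i = card (isol E (W i))"

definition dseq_d :: "'a set set \<Rightarrow> nat \<Rightarrow> (nat \<Rightarrow> 'a set) \<Rightarrow> (nat \<Rightarrow> 'a) \<Rightarrow> nat \<Rightarrow> nat" where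
  "dseq_d E s W u i =
     (if i < s then deg E (core E (W i)) (u i)
      else if is_mK1 E (W s) then 0 else card (core E (W s)) - 1)"

definition dseq_y :: "'a set set \<Rightarrow> nat \<Rightarrow> (nat \<Rightarrow> 'a set) \<Rightarrow> (nat \<Rightarrow> 'a) \<Rightarrow> nat \<Rightarrow> int" where
  "dseq_y E s W u j = int (dseq_m E W j) + 1 - int (dseq_d E s W u j)"

definition dseq_z :: "'a set set \<Rightarrow> nat \<Rightarrow> (nat \<Rightarrow> 'a set) \<Rightarrow> (nat \<Rightarrow> 'a) \<Rightarrow> nat \<Rightarrow> int" where
  "dseq_z E s W u i = (\<Sum>j=2..i. dseq_y E s W u j)"

end

theory Submission
  imports Defs
begin

lemma ivl_bij:
  assumes "finite A"
  shows "\<exists>h. bij_betw h A {a+1..a+card A}"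
proof -
  obtain h where h: "bij_betw h A {0..<card A}" using ex_bij_betw_finite_nat[OF assms] by blast
  have "bij_betw (\<lambda>n. n + (a+1)) {0..<card A} {a+1..a+card A}"
    unfolding bij_betw_def
  proof
    show "inj_on (\<lambda>n. n + (a + 1)) {0..<card A}" by (auto simp: inj_on_def)
    show "(\<lambda>n. n + (a + 1)) ` {0..<card A} = {a + 1..a + card A}"
    proof
      show "(\<lambda>n. n + (a + 1)) ` {0..<card A} \<subseteq> {a + 1..a + card A}" by auto
      show "{a + 1..a + card A} \<subseteq> (\<lambda>n. n + (a + 1)) ` {0..<card A}"
      proof
        fix x assume "x \<in> {a + 1..a + card A}"
        then have "x = (x - (a+1)) + (a+1)" "x - (a+1) \<in> {0..<card A}" by auto
        then show "x \<in> (\<lambda>n. n + (a + 1)) ` {0..<card A}" by blast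
      qed
    qed
  qed
  then show ?thesis using bij_betw_trans[OF h] by blast
qed

lemma W_sub:
  assumes "d_sequence V E s W u"
  shows "1 \<le> i \<Longrightarrow> i \<le> s \<Longrightarrow> W i \<subseteq> V"
proof (induction i)
  case 0 then show ?case by simp
next
  case (Suc i)
  show ?case
  proof (cases "i = 0")
    case True then show ?thesis using assms by (simp add: d_sequence_def)
  next
    case False
    then have "1 \<le> i" "i < s" using Suc by auto
    then have "W (Suc i) \<subseteq> W i" using assms by (auto simp: d_sequence_def core_def)
    then show ?thesis using Suc \<open>1 \<le> i\<close> by auto
  qed
qed

lemma no_loop:
  assumes "simple_graph V E" shows "{x} \<notin> E"
proof
  assume "{x} \<in> E"
  then have "\<exists>a b. a \<in> V \<and> b \<in> V \<and> a \<noteq> b \<and> {x} = {a,b}"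
    using bspec[OF assms[unfolded simple_graph_def, THEN conjunct2]] by blast
  then obtain a b where ab: "a \<noteq> b" "{x} = {a,b}" by blast
  then have "a \<in> {x}" "b \<in> {x}" by auto
  then show False using ab(1) by simp
qed

lemma isol_no_edge:
  assumes "x \<in> isol E W" "y \<in> W"
  shows "{x,y} \<notin> E" "{y,x} \<notin> E"
  using assms by (auto simp: isol_def nbrs_def insert_commute)

lemma key:
  assumes sg: "simple_graph V E" and ds: "d_sequence V E s W u"
  shows "1 \<le> i \<Longrightarrow> i \<le> s \<Longrightarrow> (\<forall>j\<in>{i..s}. t + (\<Sum>k=i..j. dseq_y E s W u k) \<ge> 0) \<Longrightarrow>
    \<exists>g. bij_betw g (W i) {1..card (W i)} \<and>
      (\<forall>x\<in>W i. \<forall>y\<in>W i. {x,y}\<in>E \<longrightarrow> int (g x + g y) \<le> int (card (W i)) + 1 + t)"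
proof (induction "s - i" arbitrary: i t)
  case 0
  then have si: "i = s" by simp
  have fin: "finite (W i)" using W_sub[OF ds, of i] 0 sg by (auto simp: simple_graph_def intro: finite_subset)
  define C where "C = core E (W i)"
  define I where "I = isol E (W i)"
  have CI: "W i = C \<union> I" "C \<inter> I = {}" by (auto simp: C_def I_def core_def isol_def)
  have fC: "finite C" "finite I" using fin CI by auto
  have cardW: "card (W i) = card C + card I" using CI fC card_Un_disjoint by metis
  obtain h1 where h1: "bij_betw h1 C {0+1..0+card C}" using ivl_bij[OF fC(1)] by blast
  obtain h2 where h2: "bij_betw h2 I {card C+1..card C+card I}" using ivl_bij[OF fC(2)] by blast
  define g where "g x = (if x \<in> C then h1 x else h2 x)" for x
  have b1: "bij_betw g C {1..card C}" using h1 by (auto simp: g_def intro: bij_betw_cong[THEN iffD1])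
  have b2: "bij_betw g I {card C+1..card C+card I}" using h2 CI
    by (subst bij_betw_cong[where g=h2]) (auto simp: g_def)
  have "bij_betw g (C \<union> I) ({1..card C} \<union> {card C+1..card C+card I})"
    by (rule bij_betw_combine[OF b1 b2]) auto
  moreover have "{1..card C} \<union> {card C+1..card C+card I} = {1..card (W i)}" using cardW by auto
  ultimately have bij: "bij_betw g (W i) {1..card (W i)}" using CI by simp
  have "int (g x + g y) \<le> int (card (W i)) + 1 + t" if xy: "x \<in> W i" "y \<in> W i" "{x,y} \<in> E" for x y
  proof -
    have "x \<notin> I" "y \<notin> I" using xy isol_no_edge I_def by metis+
    then have xC: "x \<in> C" "y \<in> C" using xy CI by auto
    have "x \<noteq> y" using xy no_loop[OF sg] by auto
    then have "g x \<noteq> g y" using b1 xC by (auto simp: bij_betw_def inj_on_def)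
    moreover have "g x \<le> card C" "g y \<le> card C" using b1 xC by (auto simp: bij_betw_def)
    ultimately have le: "g x + g y \<le> 2 * card C - 1" by linarith
    have "C \<noteq> {}" using xC by auto
    then have "\<not> is_mK1 E (W s)" using si by (auto simp: is_mK1_def C_def)
    then have dd: "dseq_d E s W u s = card C - 1" using si by (simp add: dseq_d_def C_def)
    have "t + dseq_y E s W u s \<ge> 0" using "0.prems" si by auto
    then have "t + int (card I) + 1 - int (card C - 1) \<ge> 0"
      using dd si by (simp add: dseq_y_def dseq_m_def I_def)
    moreover have "card C \<ge> 1" using xC fC card_0_eq by fastforce
    ultimately show ?thesis using le cardW by linarith
  qed
  then show ?case using bij by blast
next
  case (Suc k)
  have "i < s" "1 \<le> i" using Suc by auto
  have fin: "finite (W i)" using W_sub[OF ds, of i] Suc.prems sg by (auto simp: simple_graph_def intro: finite_subset)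
  define C where "C = core E (W i)"
  define I where "I = isol E (W i)"
  define a where "a = u i"
  define N where "N = nbrs E C a"
  define W' where "W' = W (Suc i)"
  have st: "a \<in> C" "W' = C - ({a} \<union> N)" using ds \<open>i < s\<close> \<open>1 \<le> i\<close>
    by (auto simp: d_sequence_def a_def C_def N_def W'_def)
  have CI: "W i = C \<union> I" "C \<inter> I = {}" by (auto simp: C_def I_def core_def isol_def)
  have NC: "N \<subseteq> C" "a \<notin> N" using no_loop[OF sg] by (auto simp: N_def nbrs_def)
  have fC: "finite C" "finite I" "finite N" "finite W'" using fin CI NC st by (auto intro: finite_subset)
  have cardW: "card (W i) = card C + card I" using CI fC card_Un_disjoint by metis
  have Cdec: "C = {a} \<union> N \<union> W'" using st NC by auto
  have cardC: "card C = 1 + card N + card W'"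
  proof -
    have "({a} \<union> N) \<inter> W' = {}" using st by auto
    then have "card ({a} \<union> N \<union> W') = card ({a} \<union> N) + card W'" using fC by (intro card_Un_disjoint) auto
    then have "card C = card ({a} \<union> N) + card W'" using Cdec by simp
    moreover have "card ({a} \<union> N) = 1 + card N" using NC fC by simp
    ultimately show ?thesis by simp
  qed
  have dd: "dseq_d E s W u i = card N" using \<open>i < s\<close> by (simp add: dseq_d_def deg_def N_def C_def a_def)
  have ym: "dseq_y E s W u i = int (card I) + 1 - int (card N)"
    using dd by (simp add: dseq_y_def dseq_m_def I_def)
  have c0: "t + dseq_y E s W u i \<ge> 0" using bspec[OF Suc.prems(3), of i] \<open>i < s\<close> by simp
  have "\<forall>j\<in>{Suc i..s}. (t + dseq_y E s W u i) + (\<Sum>k=Suc i..j. dseq_y E s W u k) \<ge> 0"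
  proof
    fix j assume j: "j \<in> {Suc i..s}"
    have "(\<Sum>k=i..j. dseq_y E s W u k) = dseq_y E s W u i + (\<Sum>k=Suc i..j. dseq_y E s W u k)"
      using j by (simp add: sum.atLeast_Suc_atMost)
    then show "(t + dseq_y E s W u i) + (\<Sum>k=Suc i..j. dseq_y E s W u k) \<ge> 0"
      using bspec[OF Suc.prems(3), of j] j by simp
  qed
  then obtain g' where g': "bij_betw g' W' {1..card W'}"
    "\<forall>x\<in>W'. \<forall>y\<in>W'. {x,y}\<in>E \<longrightarrow> int (g' x + g' y) \<le> int (card W') + 1 + (t + dseq_y E s W u i)"
    using Suc.hyps(1)[of "Suc i"] Suc.hyps(2) \<open>i < s\<close> unfolding W'_def by fastforce
  obtain h1 where h1: "bij_betw h1 N {0+1..0+card N}" using ivl_bij[OF fC(3)] by blast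
  obtain h2 where h2: "bij_betw h2 I {card C+1..card C+card I}" using ivl_bij[OF fC(2)] by blast
  define g where "g x = (if x \<in> I then h2 x else if x = a then card C else if x \<in> N then h1 x else card N + g' x)" for x
  have aI: "a \<notin> I" "N \<inter> I = {}" "W' \<inter> I = {}" using CI Cdec by auto
  have bW': "bij_betw g W' {card N + 1..card N + card W'}"
  proof -
    have "bij_betw (\<lambda>x. card N + g' x) W' {card N + 1..card N + card W'}"
    proof -
      have "bij_betw (\<lambda>n. card N + n) {1..card W'} {card N + 1..card N + card W'}"
        unfolding bij_betw_def
      proof
        show "inj_on ((+) (card N)) {1..card W'}" by auto
        show "(+) (card N) ` {1..card W'} = {card N + 1..card N + card W'}"
        proof
          show "{card N + 1..card N + card W'} \<subseteq> (+) (card N) ` {1..card W'}"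
          proof
            fix x assume "x \<in> {card N + 1..card N + card W'}"
            then have "x = card N + (x - card N)" "x - card N \<in> {1..card W'}" by auto
            then show "x \<in> (+) (card N) ` {1..card W'}" by blast
          qed
        qed auto
      qed
      from bij_betw_trans[OF g'(1) this] show ?thesis by (simp add: comp_def)
    qed
    moreover have "\<And>x. x \<in> W' \<Longrightarrow> g x = card N + g' x" using aI st by (auto simp: g_def)
    ultimately show ?thesis using bij_betw_cong[of W' g "\<lambda>x. card N + g' x"] by simp
  qed
  have bN: "bij_betw g N {1..card N}"
  proof -
    have "\<And>x. x \<in> N \<Longrightarrow> g x = h1 x" using aI NC by (auto simp: g_def)
    then show ?thesis using bij_betw_cong[of N g h1] h1 by simp
  qed
  have ba: "bij_betw g {a} {card C}" by (simp add: g_def aI)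
  have bI: "bij_betw g I {card C+1..card C+card I}"
  proof -
    have "\<And>x. x \<in> I \<Longrightarrow> g x = h2 x" by (auto simp: g_def)
    then show ?thesis using bij_betw_cong[of I g h2] h2 by simp
  qed
  have b1: "bij_betw g (N \<union> W') ({1..card N} \<union> {card N + 1..card N + card W'})"
    by (rule bij_betw_combine[OF bN bW']) (use st in auto)
  have b2: "bij_betw g ((N \<union> W') \<union> {a}) (({1..card N} \<union> {card N + 1..card N + card W'}) \<union> {card C})"
    by (rule bij_betw_combine[OF b1 ba]) (use cardC in auto)
  have b3: "bij_betw g (((N \<union> W') \<union> {a}) \<union> I) ((({1..card N} \<union> {card N + 1..card N + card W'}) \<union> {card C}) \<union> {card C+1..card C+card I})"
    by (rule bij_betw_combine[OF b2 bI]) (use cardC in auto)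
  have e1: "((N \<union> W') \<union> {a}) \<union> I = W i" using CI Cdec by auto
  have e2: "(({1..card N} \<union> {card N + 1..card N + card W'}) \<union> {card C}) \<union> {card C+1..card C+card I} = {1..card (W i)}"
    using cardC cardW by auto
  have bij: "bij_betw g (W i) {1..card (W i)}" using b3 e1 e2 by simp
  have gN: "g z \<le> card N" if "z \<in> N" for z using bij_betw_apply[OF bN that] by simp
  have gW: "g z \<le> card N + card W'" if "z \<in> W'" for z using bij_betw_apply[OF bW' that] by simp
  have gC: "g z \<le> card C" if "z \<in> C" for z
  proof -
    have "z \<in> N \<or> z \<in> W' \<or> z = a" using that Cdec by auto
    moreover have "g a = card C" using aI by (simp add: g_def)
    ultimately show ?thesis using gN gW cardC by fastforce
  qed
  have cd: "int (card C + card N) \<le> int (card (W i)) + 1 + t" using c0 ym cardW by linarith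
  have "int (g x + g y) \<le> int (card (W i)) + 1 + t" if xy: "x \<in> W i" "y \<in> W i" "{x,y} \<in> E" for x y
  proof -
    have "x \<notin> I" "y \<notin> I" using xy isol_no_edge I_def by metis+
    then have xC: "x \<in> C" "y \<in> C" using xy CI by auto
    have "x \<noteq> y" using xy no_loop[OF sg] by auto
    show ?thesis
    proof (cases "x = a \<or> y = a \<or> x \<in> N \<or> y \<in> N")
      case True
      have "y \<in> N" if "x = a" using that xy xC \<open>x \<noteq> y\<close> by (auto simp: N_def nbrs_def)
      moreover have "x \<in> N" if "y = a" using that xy xC \<open>x \<noteq> y\<close> by (auto simp: N_def nbrs_def insert_commute)
      ultimately have "(g x \<le> card N \<and> g y \<le> card C) \<or> (g y \<le> card N \<and> g x \<le> card C)"
        using True gC gN xC by blast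
      then have "g x + g y \<le> card C + card N" by linarith
      then show ?thesis using cd by linarith
    next
      case False
      then have w: "x \<in> W'" "y \<in> W'" using xC st by auto
      then have "g x = card N + g' x" "g y = card N + g' y" using aI st by (auto simp: g_def)
      moreover have "int (g' x + g' y) \<le> int (card W') + 1 + (t + dseq_y E s W u i)" using g'(2) w xy by blast
      ultimately show ?thesis using ym cardC cardW by linarith
    qed
  qed
  then show ?case using bij by blast
qed

lemma big_label:
  fixes A :: "nat set"
  assumes "finite A" "0 \<notin> A" "A \<noteq> {}"
  shows "\<exists>x\<in>A. card A \<le> x"
proof (rule ccontr)
  assume "\<not> ?thesis"
  then have "A \<subseteq> {1..<card A}" using assms(2) by (auto simp: not_le Suc_le_eq) (metis gr0I)
  then have "card A \<le> card {1..<card A}" by (intro card_mono) auto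
  then show False using assms card_gt_0_iff[of A] by simp
qed

theorem mainTheorem5:
  fixes V :: "'a set" and E :: "'a set set" and s :: nat
    and W :: "nat \<Rightarrow> 'a set" and u :: "nat \<Rightarrow> 'a"
  assumes "simple_graph V E"
    and "1 \<le> min_degree V E" and "min_degree V E \<le> card V - 2"
    and "d_sequence V E s W u"
    and "\<forall>i\<in>{2..s}. dseq_z E s W u i \<ge> 0"
  shows "strength V E \<le> card V + dseq_d E s W u 1 \<and>
         (dseq_d E s W u 1 = min_degree V E \<longrightarrow> strength V E = card V + dseq_d E s W u 1)"
proof -
  note sg = assms(1) and ds = assms(4)
  define p where "p = card V"
  define d1 where "d1 = dseq_d E s W u 1"
  define \<delta> where "\<delta> = min_degree V E"
  have finV: "finite V" using sg by (simp add: simple_graph_def)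
  have "p \<ge> 3" using assms(2,3) unfolding p_def by linarith
  then have Vne: "V \<noteq> {}" using p_def by auto
  have s2: "2 \<le> s" "W 1 = V" using ds unfolding d_sequence_def by blast+
  have EV: "x \<in> V \<and> y \<in> V" if "{x,y} \<in> E" for x y
  proof -
    have "\<exists>a b. a \<in> V \<and> b \<in> V \<and> a \<noteq> b \<and> {x,y} = {a,b}"
      using bspec[OF sg[unfolded simple_graph_def, THEN conjunct2] that] .
    then obtain a b where ab: "a \<in> V" "b \<in> V" "{x,y} = {a,b}" by blast
    then have "x \<in> {a,b}" "y \<in> {a,b}" by auto
    then show ?thesis using ab by auto
  qed
  have degge: "deg E V x \<ge> \<delta>" if "x \<in> V" for x
    unfolding \<delta>_def min_degree_def using finV that by (intro Min_le) auto
  obtain v0 where v0: "v0 \<in> V" using Vne by blast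
  have "deg E V v0 \<ge> 1" using degge[OF v0] assms(2) \<delta>_def by linarith
  then have "nbrs E V v0 \<noteq> {}" unfolding deg_def by auto
  then obtain w0 where e0: "{v0,w0} \<in> E" unfolding nbrs_def by auto
  have Sfin: "finite {f x + f y | x y. {x,y} \<in> E}" for f :: "'a \<Rightarrow> nat"
  proof -
    have "{f x + f y | x y. {x,y} \<in> E} \<subseteq> (\<lambda>(x,y). f x + f y) ` (V \<times> V)" using EV by fastforce
    then show ?thesis using finV finite_subset by blast
  qed
  have Sne: "{f x + f y | x y. {x,y} \<in> E} \<noteq> {}" for f :: "'a \<Rightarrow> nat" using e0 by blast
  have soub: "strength_of E f \<le> B" if "\<And>x y. {x,y} \<in> E \<Longrightarrow> f x + f y \<le> B" for f B
    unfolding strength_of_def using Sfin[of f] Sne[of f] that by (subst Max_le_iff) auto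
  have numb_bound: "f x \<le> p" if "numbering V f" "x \<in> V" for f x
    using that bij_betw_apply unfolding numbering_def p_def by fastforce
  have cond: "\<forall>j\<in>{1..s}. (int d1 - 1) + (\<Sum>k=1..j. dseq_y E s W u k) \<ge> 0"
  proof
    fix j assume j: "j \<in> {1..s}"
    have y1: "int d1 - 1 + dseq_y E s W u 1 \<ge> 0" by (simp add: dseq_y_def d1_def)
    show "(int d1 - 1) + (\<Sum>k=1..j. dseq_y E s W u k) \<ge> 0"
    proof (cases "j = 1")
      case True then show ?thesis using y1 by simp
    next
      case False
      then have "j \<in> {2..s}" using j by auto
      then have z: "dseq_z E s W u j \<ge> 0" using assms(5) by blast
      have "(\<Sum>k=1..j. dseq_y E s W u k) = dseq_y E s W u 1 + (\<Sum>k=Suc 1..j. dseq_y E s W u k)"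
        using j by (simp add: sum.atLeast_Suc_atMost)
      moreover have "Suc 1 = 2" by simp
      ultimately have "(\<Sum>k=1..j. dseq_y E s W u k) = dseq_y E s W u 1 + dseq_z E s W u j"
        unfolding dseq_z_def by metis
      then show ?thesis using z y1 by linarith
    qed
  qed
  obtain f where f: "bij_betw f (W 1) {1..card (W 1)}"
    "\<forall>x\<in>W 1. \<forall>y\<in>W 1. {x,y}\<in>E \<longrightarrow> int (f x + f y) \<le> int (card (W 1)) + 1 + (int d1 - 1)"
    using key[OF sg ds, of 1 "int d1 - 1"] s2 cond by auto
  have fn: "numbering V f" using f s2 by (simp add: numbering_def)
  have "strength_of E f \<le> p + d1"
  proof (rule soub)
    fix x y assume "{x,y} \<in> E"
    then show "f x + f y \<le> p + d1" using f(2) EV s2 p_def by fastforce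
  qed
  define T where "T = {strength_of E g | g. numbering V g}"
  have Tsub: "T \<subseteq> {..2*p}"
  proof
    fix t assume "t \<in> T"
    then obtain g where g: "numbering V g" "t = strength_of E g" unfolding T_def by blast
    have "strength_of E g \<le> 2*p"
    proof (rule soub)
      fix x y assume "{x,y} \<in> E"
      then have "g x \<le> p" "g y \<le> p" using g(1) numb_bound EV by blast+
      then show "g x + g y \<le> 2*p" by linarith
    qed
    then show "t \<in> {..2*p}" using g by simp
  qed
  have Tfin: "finite T" using Tsub finite_subset by blast
  have fT: "strength_of E f \<in> T" using fn T_def by blast
  have up: "strength V E \<le> p + d1"
    using Min_le[OF Tfin fT] \<open>strength_of E f \<le> p + d1\<close> unfolding strength_def T_def[symmetric] by linarith
  have low: "strength_of E g \<ge> p + \<delta>" if g: "numbering V g" for g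
  proof -
    have "p \<in> {1..card V}" using \<open>p \<ge> 3\<close> p_def by auto
    then have "p \<in> g ` V" using g unfolding numbering_def bij_betw_def by simp
    then obtain x where x: "x \<in> V" "g x = p" by (metis imageE)
    define A where "A = nbrs E V x"
    have Afin: "finite A" using finV by (simp add: A_def nbrs_def)
    have cA: "card A \<ge> \<delta>" using degge[OF x(1)] by (simp add: A_def deg_def)
    then have "A \<noteq> {}" using assms(2) \<delta>_def by auto
    have inj: "inj_on g A" using g by (auto simp: numbering_def bij_betw_def A_def nbrs_def intro: inj_on_subset)
    have "0 \<notin> g ` A" using g bij_betw_apply unfolding numbering_def A_def nbrs_def by fastforce
    then obtain y where y: "y \<in> A" "g y \<ge> card (g ` A)"
      using big_label[of "g ` A"] Afin \<open>A \<noteq> {}\<close> by auto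
    have "card (g ` A) = card A" using inj card_image by blast
    then have "g x + g y \<ge> p + \<delta>" using y cA x by linarith
    moreover have "{x,y} \<in> E" using y(1) unfolding A_def nbrs_def by simp
    then have "g x + g y \<in> {g x + g y | x y. {x,y} \<in> E}" by blast
    then have "g x + g y \<le> strength_of E g" unfolding strength_of_def using Sfin[of g] by (rule Max_ge[rotated])
    ultimately show ?thesis by linarith
  qed
  have "T \<noteq> {}" using fT by blast
  then have "Min T \<in> T" using Tfin Min_in by blast
  then have "strength V E \<ge> p + \<delta>" using low unfolding strength_def T_def[symmetric] by (auto simp: T_def)
  then show ?thesis using up unfolding p_def d1_def \<delta>_def by auto
qed

end
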